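(* Let $X$ be a compact metric space, let $f:X\to X$ be continuous and let $x\in X$. If $\omega_f(x)$ is totally periodic, then $\omega_f(x)$ has finitely many connected components, and these components form a periodic cycle: they can be listed as $C_0,\dots,C_{k-1}$ with $f(C_0)=C_1, f(C_1)=C_2,\dots,f(C_{k-2})=C_{k-1}, f(C_{k-1})=C_0$.
   Context: For $x\in X$, the $\omega$-limit set is $\omega_f(x)=\{y\in X:\ \exists\, n_i\in\mathbb{N},\ n_i\to+\infty,\ \lim_{i\to\infty} d(f^{n_i}(x),y)=0\}$. A point $y$ is periodic if $f^n(y)=y$ for some $n\ge1$; $P(f)$ denotes the set of periodic points. The set $\omega_f(x)$ is called totally periodic if $\omega_f(x)\subset P(f)$. *)

theory Defs
  imports "HOL-Analysis.Analysis"
begin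

definition omega_limit :: "('a::metric_space \<Rightarrow> 'a) \<Rightarrow> 'a \<Rightarrow> 'a set" where
  "omega_limit f x = {y. \<exists>n::nat \<Rightarrow> nat. filterlim n at_top sequentially \<and>
                          ((\<lambda>i. (f ^^ n i) x) \<longlongrightarrow> y) sequentially}"

definition periodic_points :: "'a set \<Rightarrow> ('a \<Rightarrow> 'a) \<Rightarrow> 'a set" where
  "periodic_points X f = {y \<in> X. \<exists>n\<ge>1. (f ^^ n) y = y}"

end

theory Submission
  imports Defs
begin


lemma qc_sep:
  fixes S :: "'a::metric_space set"
  assumes "compact S" "y \<in> S" "w \<in> S" "w \<notin> connected_component_set S y"
  shows "\<exists>U. openin (top_of_set S) U \<and> closedin (top_of_set S) U \<and> y \<in> U \<and> w \<notin> U"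
proof -
  let ?X = "top_of_set S"
  have cs: "compact_space ?X"
    using assms(1) by (simp add: compact_space_subtopology)
  have hs: "Hausdorff_space ?X"
    by (simp add: Hausdorff_space_subtopology)
  have "quasi_components_of ?X = connected_components_of ?X"
    using cs hs quasi_eq_connected_components_of by blast
  then have "\<forall>x. quasi_component_of ?X x = connected_component_of ?X x"
    by (subst (asm) quasi_eq_connected_components_of_pointwise_alt)
  then have eq: "quasi_component_of ?X y = connected_component_of ?X y"
    by (rule spec)
  have "\<not> connected_component_of ?X y w"
  proof
    assume "connected_component_of ?X y w"
    then obtain T where "connectedin ?X T" "y \<in> T" "w \<in> T"
      unfolding connected_component_of_def by blast
    then have "connected T" "T \<subseteq> S"
      by (auto simp: connectedin_subtopology)
    then have "connected_component S y w"
      using connected_componentI \<open>y \<in> T\<close> \<open>w \<in> T\<close> by blast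
    then show False using assms(4) by simp
  qed
  then have "\<not> quasi_component_of ?X y w" using eq by simp
  then obtain T where T: "closedin ?X T" "openin ?X T" "\<not> (y \<in> T \<longleftrightarrow> w \<in> T)"
    using assms(2,3) unfolding quasi_component_of_def by auto
  show ?thesis
  proof (cases "y \<in> T")
    case True then show ?thesis using T by blast
  next
    case False
    then have "w \<in> T" using T by blast
    have "openin ?X (S - T)" "closedin ?X (S - T)"
      using T by (auto intro: openin_diff closedin_diff)
    then show ?thesis using False \<open>w \<in> T\<close> assms(2) by blast
  qed
qed

lemma clopen_sat:
  assumes "openin (top_of_set S) U" "closedin (top_of_set S) U" "y \<in> U"
  shows "connected_component_set S y \<subseteq> U"
proof -
  let ?C = "connected_component_set S y"
  have "openin (top_of_set ?C) (?C \<inter> U)"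
    using assms(1) connected_component_subset openin_subset_trans openin_subtopology_Int2 
    by (metis inf_commute openin_Int openin_subtopology_Int_subset openin_topspace topspace_euclidean_subtopology)
  moreover have "closedin (top_of_set ?C) (?C \<inter> U)"
    using assms(2) by (metis closedin_closed_Int closedin_closed_subset connected_component_subset inf_commute inf_le1)
  ultimately have "?C \<inter> U = {} \<or> ?C \<inter> U = ?C"
    using connected_clopen connected_connected_component by blast
  moreover have "y \<in> ?C \<inter> U" using assms openin_imp_subset by fastforce
  ultimately show ?thesis by blast
qed


lemma orbit_in:
  assumes "f ` X \<subseteq> X" "x \<in> X"
  shows "(f ^^ m) x \<in> X"
  using assms by (induction m) auto

lemma om_char:
  fixes f :: "'a::metric_space \<Rightarrow> 'a"
  shows "y \<in> omega_limit f x \<longleftrightarrow> (\<forall>e>0. \<forall>M. \<exists>m\<ge>M. dist ((f ^^ m) x) y < e)"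
proof
  assume "y \<in> omega_limit f x"
  then obtain n :: "nat \<Rightarrow> nat" where n: "filterlim n at_top sequentially"
    "((\<lambda>i. (f ^^ n i) x) \<longlongrightarrow> y) sequentially"
    unfolding omega_limit_def by blast
  show "\<forall>e>0. \<forall>M. \<exists>m\<ge>M. dist ((f ^^ m) x) y < e"
  proof (intro allI impI)
    fix e :: real and M assume "e > 0"
    have "eventually (\<lambda>i. dist ((f ^^ n i) x) y < e) sequentially"
      using n(2) \<open>e > 0\<close> tendstoD by blast
    moreover have "eventually (\<lambda>i. n i \<ge> M) sequentially"
      using n(1) by (simp add: filterlim_at_top)
    ultimately have "eventually (\<lambda>i. dist ((f ^^ n i) x) y < e \<and> n i \<ge> M) sequentially"
      by (rule eventually_conj)
    then obtain i where "dist ((f ^^ n i) x) y < e \<and> n i \<ge> M"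
      using eventually_sequentially by auto
    then show "\<exists>m\<ge>M. dist ((f ^^ m) x) y < e" by blast
  qed
next
  assume H: "\<forall>e>0. \<forall>M. \<exists>m\<ge>M. dist ((f ^^ m) x) y < e"
  have "\<forall>i. \<exists>m\<ge>i. dist ((f ^^ m) x) y < inverse (real (Suc i))"
    using H by simp
  then obtain n where n: "\<And>i. n i \<ge> i" "\<And>i. dist ((f ^^ n i) x) y < inverse (real (Suc i))"
    by metis
  have "filterlim n at_top sequentially"
    by (rule filterlim_at_top_mono[OF filterlim_ident]) (use n(1) in auto)
  moreover have "((\<lambda>i. (f ^^ n i) x) \<longlongrightarrow> y) sequentially"
    unfolding lim_sequentially
  proof (intro allI impI)
    fix r :: real assume "r > 0"
    then obtain N where N: "inverse (real (Suc N)) < r" using reals_Archimedean by blast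
    show "\<exists>no. \<forall>i\<ge>no. dist ((f ^^ n i) x) y < r"
    proof (intro exI allI impI)
      fix i assume "i \<ge> N"
      then have "inverse (real (Suc i)) \<le> inverse (real (Suc N))"
        by (simp add: le_imp_inverse_le)
      then show "dist ((f ^^ n i) x) y < r" using n(2)[of i] N by linarith
    qed
  qed
  ultimately show "y \<in> omega_limit f x" unfolding omega_limit_def by blast
qed

lemma om_visit:
  fixes f :: "'a::metric_space \<Rightarrow> 'a"
  assumes "y \<in> omega_limit f x" "open G" "y \<in> G"
  shows "\<exists>m\<ge>M. (f ^^ m) x \<in> G"
proof -
  obtain e where "e > 0" "ball y e \<subseteq> G" using assms openE by blast
  then obtain m where "m \<ge> M" "dist ((f ^^ m) x) y < e" using assms(1) om_char by blast
  then show ?thesis using \<open>ball y e \<subseteq> G\<close> by (auto simp: dist_commute)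
qed

lemma om_closed:
  fixes f :: "'a::metric_space \<Rightarrow> 'a"
  shows "closed (omega_limit f x)"
proof -
  have "closure (omega_limit f x) \<subseteq> omega_limit f x"
  proof
    fix y assume "y \<in> closure (omega_limit f x)"
    show "y \<in> omega_limit f x"
      unfolding om_char
    proof (intro allI impI)
      fix e :: real and M assume "e > 0"
      then obtain z where z: "z \<in> omega_limit f x" "dist z y < e/2"
        using \<open>y \<in> closure (omega_limit f x)\<close> closure_approachable[of y] by (meson half_gt_zero)
      then obtain m where "m \<ge> M" "dist ((f ^^ m) x) z < e/2"
        using om_char \<open>e > 0\<close> by (meson half_gt_zero)
      then show "\<exists>m\<ge>M. dist ((f ^^ m) x) y < e"
        using z(2) dist_triangle[of "(f ^^ m) x" y z] by (intro exI[of _ m]) auto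
    qed
  qed
  then show ?thesis using closure_subset_eq by blast
qed

lemma om_sub:
  fixes f :: "'a::metric_space \<Rightarrow> 'a"
  assumes "compact X" "f ` X \<subseteq> X" "x \<in> X"
  shows "omega_limit f x \<subseteq> X"
proof
  fix y assume "y \<in> omega_limit f x"
  then obtain n :: "nat \<Rightarrow> nat" where n: "((\<lambda>i. (f ^^ n i) x) \<longlongrightarrow> y) sequentially"
    unfolding omega_limit_def by blast
  show "y \<in> X"
    by (rule closed_sequentially[OF compact_imp_closed[OF assms(1)] _ n])
       (use orbit_in[OF assms(2,3)] in auto)
qed

lemma om_compact:
  fixes f :: "'a::metric_space \<Rightarrow> 'a"
  assumes "compact X" "f ` X \<subseteq> X" "x \<in> X"
  shows "compact (omega_limit f x)"
  using om_sub[OF assms] om_closed assms(1) compact_Int_closed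
  by (metis inf.absorb_iff2)

lemma om_nonempty:
  fixes f :: "'a::metric_space \<Rightarrow> 'a"
  assumes "compact X" "f ` X \<subseteq> X" "x \<in> X"
  shows "omega_limit f x \<noteq> {}"
proof -
  obtain l r where "l \<in> X" "strict_mono r" "((\<lambda>i. (f ^^ i) x) \<circ> r) \<longlonglongrightarrow> l"
    using assms(1) orbit_in[OF assms(2,3)] unfolding compact_def seq_compact_def by metis
  then have "l \<in> omega_limit f x"
    unfolding omega_limit_def using filterlim_subseq[of r] by (auto simp: o_def)
  then show ?thesis by blast
qed

lemma om_inv:
  fixes f :: "'a::metric_space \<Rightarrow> 'a"
  assumes "compact X" "continuous_on X f" "f ` X \<subseteq> X" "x \<in> X"
  shows "f ` omega_limit f x \<subseteq> omega_limit f x"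
proof
  fix z assume "z \<in> f ` omega_limit f x"
  then obtain y where y: "y \<in> omega_limit f x" "z = f y" by blast
  then obtain n :: "nat \<Rightarrow> nat" where n: "filterlim n at_top sequentially"
    "((\<lambda>i. (f ^^ n i) x) \<longlongrightarrow> y) sequentially"
    unfolding omega_limit_def by blast
  have "y \<in> X" using y om_sub assms by (metis in_mono assms(1,3,4))
  have "((\<lambda>i. f ((f ^^ n i) x)) \<longlongrightarrow> f y) sequentially"
    using continuous_on_tendsto_compose[OF assms(2) n(2) \<open>y \<in> X\<close>]
      orbit_in[OF assms(3,4)] by (auto simp: o_def)
  then have "((\<lambda>i. (f ^^ (Suc (n i))) x) \<longlongrightarrow> f y) sequentially" by simp
  moreover have "filterlim (\<lambda>i. Suc (n i)) at_top sequentially"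
    by (rule filterlim_at_top_mono[OF n(1)]) auto
  ultimately show "z \<in> omega_limit f x" unfolding omega_limit_def using y by blast
qed

lemma om_avoid:
  fixes f :: "'a::metric_space \<Rightarrow> 'a"
  assumes "compact K" "K \<inter> omega_limit f x = {}"
  shows "\<exists>M. \<forall>m\<ge>M. (f ^^ m) x \<notin> K"
proof (rule ccontr)
  assume "\<not> ?thesis"
  then have "\<forall>M. \<exists>m\<ge>M. (f ^^ m) x \<in> K" by blast
  then obtain n where n: "\<And>i. n i \<ge> i" "\<And>i. (f ^^ n i) x \<in> K" by metis
  obtain l r where "l \<in> K" "strict_mono r" "((\<lambda>i. (f ^^ n i) x) \<circ> r) \<longlonglongrightarrow> l"
    using assms(1) n(2) unfolding compact_def seq_compact_def by metis
  moreover have "filterlim (n \<circ> r) at_top sequentially"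
  proof (rule filterlim_at_top_mono[OF filterlim_subseq[OF \<open>strict_mono r\<close>]])
    show "\<forall>\<^sub>F i in sequentially. r i \<le> (n \<circ> r) i" using n(1) by auto
  qed
  ultimately have "l \<in> omega_limit f x" unfolding omega_limit_def by (auto simp: o_def)
  then show False using \<open>l \<in> K\<close> assms(2) by blast
qed



lemma om_L1:
  fixes f :: "'a::metric_space \<Rightarrow> 'a"
  assumes "compact X" "continuous_on X f" "f ` X \<subseteq> X" "x \<in> X"
    and "openin (top_of_set (omega_limit f x)) A" "closedin (top_of_set (omega_limit f x)) A"
    and "A \<noteq> {}" "f ` A \<subseteq> A"
  shows "A = omega_limit f x"
proof (rule ccontr)
  let ?W = "omega_limit f x"
  assume ne: "A \<noteq> ?W"
  have AW: "A \<subseteq> ?W" using assms(5) openin_imp_subset by auto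
  define B where "B = ?W - A"
  have "B \<noteq> {}" using ne AW B_def by blast
  have clW: "closed ?W" by (rule om_closed)
  have "closed A" using assms(6) clW closedin_closed_trans by blast
  have "closedin (top_of_set ?W) B" unfolding B_def using assms(5)
    by (metis closedin_diff closedin_topspace topspace_euclidean_subtopology)
  then have "closed B" using clW closedin_closed_trans by blast
  have "A \<inter> B = {}" using B_def by blast
  then obtain GA GB where G: "open GA" "open GB" "A \<subseteq> GA" "B \<subseteq> GB" "GA \<inter> GB = {}"
    using t4_space[OF \<open>closed A\<close> \<open>closed B\<close>] by metis
  obtain H where H: "open H" "H \<inter> X = f -` GA \<inter> X"
    using assms(2) G(1) unfolding continuous_on_open_invariant by metis
  have WX: "?W \<subseteq> X" using om_sub assms(1,3,4) by blast
  define H' where "H' = H \<inter> GA"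
  have "open H'" using H(1) G(1) H'_def by blast
  have AH': "A \<subseteq> H'" using AW WX assms(8) G(3) H(2) H'_def by blast
  define K where "K = X - (H' \<union> GB)"
  have "compact K" unfolding K_def
    using assms(1) \<open>open H'\<close> G(2) by (intro compact_diff) auto
  have "K \<inter> ?W = {}" unfolding K_def using AH' G(4) B_def by blast
  then obtain M where M: "\<And>m. m \<ge> M \<Longrightarrow> (f ^^ m) x \<notin> K"
    using om_avoid[OF \<open>compact K\<close>] by blast
  obtain a where "a \<in> A" using assms(7) by blast
  then obtain m0 where m0: "m0 \<ge> M" "(f ^^ m0) x \<in> H'"
    using om_visit[of a f x H' M] AW AH' \<open>open H'\<close> by blast
  have stay: "(f ^^ (m0 + j)) x \<in> H'" for j
  proof (induction j)
    case 0 then show ?case using m0 by simp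
  next
    case (Suc j)
    let ?z = "(f ^^ (m0 + j)) x"
    have inX: "?z \<in> X" using orbit_in[OF assms(3,4)] by blast
    have "?z \<in> H" using Suc.IH unfolding H'_def by blast
    then have "?z \<in> f -` GA \<inter> X" using inX H(2) by blast
    then have fz: "f ?z \<in> GA" by blast
    have eq: "(f ^^ (m0 + Suc j)) x = f ?z" by simp
    have "f ?z \<notin> GB" using fz G(5) by blast
    moreover have "f ?z \<notin> K" using M[of "m0 + Suc j"] m0(1) eq by simp
    moreover have "f ?z \<in> X" using inX assms(3) by blast
    ultimately show ?case unfolding K_def eq by blast
  qed
  obtain b where "b \<in> B" using \<open>B \<noteq> {}\<close> by blast
  then obtain m where m: "m \<ge> m0" "(f ^^ m) x \<in> GB"
    using om_visit[of b f x GB m0] B_def G(2,4) by blast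
  have "(f ^^ m) x \<in> H'" using stay[of "m - m0"] m(1) by simp
  then show False using m(2) G(5) H'_def by blast
qed



lemma per_mult:
  assumes "(f ^^ n) y = y" shows "(f ^^ (k * n)) y = y"
proof (induction k)
  case (Suc k)
  have "(f ^^ (Suc k * n)) y = (f ^^ n) ((f ^^ (k * n)) y)"
    by (simp add: funpow_add)
  then show ?case using Suc assms by simp
qed simp

locale tp =
  fixes S :: "'a::metric_space set" and f :: "'a \<Rightarrow> 'a"
  assumes cpt: "compact S" and cont: "continuous_on S f" and inv: "f ` S \<subseteq> S"
    and per: "\<And>y. y \<in> S \<Longrightarrow> \<exists>n\<ge>1. (f ^^ n) y = y"
begin

abbreviation comp where "comp y \<equiv> connected_component_set S y"

abbreviation clopen where "clopen U \<equiv> openin (top_of_set S) U \<and> closedin (top_of_set S) U"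

lemma iter_in: "y \<in> S \<Longrightarrow> (f ^^ n) y \<in> S"
  using inv by (induction n) auto

lemma iter_cont: "continuous_on S (f ^^ n)"
proof (induction n)
  case 0 then show ?case by (simp add: continuous_on_id)
next
  case (Suc n)
  have "continuous_on S (f \<circ> (f ^^ n))"
    by (rule continuous_on_compose[OF Suc]) (use cont iter_in in \<open>auto intro: continuous_on_subset\<close>)
  then show ?case by simp
qed

lemma comp_img_sub: "y \<in> S \<Longrightarrow> f ` comp y \<subseteq> comp (f y)"
proof -
  assume "y \<in> S"
  have "connected (f ` comp y)"
    by (rule connected_continuous_image) (use continuous_on_subset[OF cont connected_component_subset] in auto)
  moreover have "f ` comp y \<subseteq> S" using inv connected_component_subset by blast
  moreover have "f y \<in> f ` comp y" using \<open>y \<in> S\<close> by simp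
  ultimately show ?thesis by (rule connected_component_maximal[rotated])
qed

lemma comp_iter_sub: "y \<in> S \<Longrightarrow> (f ^^ n) ` comp y \<subseteq> comp ((f ^^ n) y)"
proof (induction n)
  case 0 then show ?case by simp
next
  case (Suc n)
  have "(f ^^ Suc n) ` comp y = f ` ((f ^^ n) ` comp y)" by (simp add: image_comp)
  also have "\<dots> \<subseteq> f ` comp ((f ^^ n) y)" using Suc by blast
  also have "\<dots> \<subseteq> comp ((f ^^ Suc n) y)" using comp_img_sub iter_in Suc.prems by simp
  finally show ?case .
qed

lemma comp_self: "y \<in> S \<Longrightarrow> y \<in> comp y" by simp

lemma comp_inj:
  assumes "a \<in> S" "b \<in> S" "comp (f a) = comp (f b)"
  shows "comp a = comp b"
proof -
  obtain p where p: "p \<ge> 1" "(f ^^ p) a = a" using per assms(1) by blast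
  obtain q where q: "q \<ge> 1" "(f ^^ q) b = b" using per assms(2) by blast
  define n where "n = q * p"
  have na: "(f ^^ n) a = a" unfolding n_def using per_mult p(2) by metis
  have nb: "(f ^^ n) b = b" unfolding n_def using per_mult[OF q(2), of p] by (simp add: mult.commute)
  have "n \<ge> 1" using p q n_def by simp
  then have nn: "n = Suc (n - 1)" by simp
  have ea: "(f ^^ (n - 1)) (f a) = a" using na nn by (metis funpow_Suc_right o_apply)
  have eb: "(f ^^ (n - 1)) (f b) = b" using nb nn by (metis funpow_Suc_right o_apply)
  have "f b \<in> comp (f a)" using assms iter_in[of b 1] by (simp add: inv image_subset_iff)
  then have "b \<in> comp a"
    using comp_iter_sub[of "f a" "n - 1"] ea eb assms(1) inv by (metis image_eqI image_subset_iff subsetD)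
  then have "comp b = comp a" by (rule connected_component_eq)
  then show ?thesis by simp
qed

lemma comp_img: "y \<in> S \<Longrightarrow> f ` comp y = comp (f y)"
proof
  assume yS: "y \<in> S"
  show "f ` comp y \<subseteq> comp (f y)" using comp_img_sub yS by blast
  show "comp (f y) \<subseteq> f ` comp y"
  proof
    fix z assume z: "z \<in> comp (f y)"
    then have zS: "z \<in> S" using connected_component_subset by blast
    obtain r where r: "r \<ge> 1" "(f ^^ r) z = z" using per zS by blast
    define z' where "z' = (f ^^ (r - 1)) z"
    have z'S: "z' \<in> S" using iter_in zS z'_def by blast
    have fz': "f z' = z" unfolding z'_def using r by (metis Suc_diff_1 funpow.simps(2) o_apply less_le_trans zero_less_one)
    have "comp (f z') = comp (f y)" using fz' z connected_component_eq by metis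
    then have "comp z' = comp y" by (rule comp_inj[OF z'S yS])
    then have "z' \<in> comp y" using z'S by (metis comp_self)
    then show "z \<in> f ` comp y" using fz' by blast
  qed
qed

lemma comp_iter_img: "y \<in> S \<Longrightarrow> (f ^^ n) ` comp y = comp ((f ^^ n) y)"
proof (induction n)
  case 0 then show ?case by simp
next
  case (Suc n)
  have "(f ^^ Suc n) ` comp y = f ` ((f ^^ n) ` comp y)" by (simp add: image_comp)
  also have "\<dots> = comp ((f ^^ Suc n) y)" using Suc comp_img iter_in by simp
  finally show ?case .
qed

lemma comp_cong:
  assumes "y \<in> S" "z \<in> comp y" shows "comp ((f ^^ n) z) = comp ((f ^^ n) y)"
proof -
  have "(f ^^ n) z \<in> comp ((f ^^ n) y)" using comp_iter_sub[OF assms(1), of n] assms(2) by blast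
  then show ?thesis by (rule connected_component_eq)
qed

lemma clopen_img:
  assumes "clopen U"
  shows "clopen (f ` U)"
proof -
  have US: "U \<subseteq> S" using assms openin_imp_subset by blast
  have cl: "closedin (top_of_set S) (f ` V)" if "closedin (top_of_set S) V" for V
  proof -
    have "V \<subseteq> S" using that closedin_imp_subset by blast
    have "compact V" using closedin_compact[OF cpt that] .
    then have "compact (f ` V)"
      using compact_continuous_image continuous_on_subset[OF cont \<open>V \<subseteq> S\<close>] by blast
    then show ?thesis using closed_subset compact_imp_closed inv \<open>V \<subseteq> S\<close> by (metis image_mono order_trans)
  qed
  have eq: "S - f ` U = f ` (S - U)"
  proof
    show "S - f ` U \<subseteq> f ` (S - U)"
    proof
      fix z assume z: "z \<in> S - f ` U"
      obtain r where r: "r \<ge> 1" "(f ^^ r) z = z" using per z by blast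
      define z' where "z' = (f ^^ (r - 1)) z"
      have z'S: "z' \<in> S" using iter_in z z'_def by blast
      have fz': "f z' = z" unfolding z'_def using r by (metis Suc_diff_1 funpow.simps(2) o_apply less_le_trans zero_less_one)
      then show "z \<in> f ` (S - U)" using z z'S by blast
    qed
    show "f ` (S - U) \<subseteq> S - f ` U"
    proof
      fix z assume "z \<in> f ` (S - U)"
      then obtain u' where u': "u' \<in> S" "u' \<notin> U" "z = f u'" by blast
      have "z \<notin> f ` U"
      proof
        assume "z \<in> f ` U"
        then obtain u where u: "u \<in> U" "z = f u" by blast
        have uS: "u \<in> S" using US u(1) by blast
        have "comp u = comp u'" using comp_inj[of u u'] uS u'(1) u(2) u'(3) by simp
        then have "u' \<in> comp u" using u'(1) by simp
        moreover have "comp u \<subseteq> U" using clopen_sat[of S U u] assms u(1) by blast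
        ultimately show False using u'(2) by blast
      qed
      then show "z \<in> S - f ` U" using u' inv by blast
    qed
  qed
  have "closedin (top_of_set S) (S - U)" using assms by (simp add: closedin_diff)
  then have "closedin (top_of_set S) (S - f ` U)" using eq cl by simp
  moreover have "f ` U \<subseteq> S" using US inv by blast
  ultimately have "openin (top_of_set S) (f ` U)"
    by (simp add: openin_closedin_eq)
  then show ?thesis using cl assms by blast
qed

lemma clopen_iter_img: "clopen U \<Longrightarrow> clopen ((f ^^ n) ` U)"
proof (induction n)
  case 0 then show ?case by (simp only: funpow_0 image_ident)
next
  case (Suc n)
  have "clopen (f ` ((f ^^ n) ` U))" by (rule clopen_img) (rule Suc.IH[OF Suc.prems])
  then show ?case by (simp add: image_comp)
qed

end


locale tpo = tp +
  assumes ne: "S \<noteq> {}"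
    and L1: "\<And>A. clopen A \<Longrightarrow> A \<noteq> {} \<Longrightarrow> f ` A \<subseteq> A \<Longrightarrow> A = S"
begin

definition R where "R n = {y \<in> S. (f ^^ n) y \<in> comp y}"

lemma clopen_sub: "clopen U \<Longrightarrow> U \<subseteq> S"
  using openin_imp_subset by blast

lemma bstep:
  assumes "clopen U" "\<not> U \<subseteq> R n"
  shows "\<exists>U'. clopen U' \<and> U' \<noteq> {} \<and> U' \<subseteq> U \<and> U' \<inter> R n = {}"
proof -
  obtain y where y: "y \<in> U" "y \<notin> R n" using assms(2) by blast
  have yS: "y \<in> S" using y(1) clopen_sub[OF assms(1)] by blast
  define w where "w = (f ^^ n) y"
  have wS: "w \<in> S" unfolding w_def using iter_in[OF yS] .
  have wn: "w \<notin> comp y" using y(2) yS unfolding R_def w_def by blast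
  obtain V where V: "openin (top_of_set S) V" "closedin (top_of_set S) V" "y \<in> V" "w \<notin> V"
    using qc_sep[OF cpt yS wS wn] by blast
  have fS: "(f ^^ n) \<in> S \<rightarrow> S" using iter_in by blast
  have o1: "openin (top_of_set S) (S - V)"
    using V(2) by (simp add: openin_diff)
  have c1: "closedin (top_of_set S) (S - V)"
    using V(1) by (simp add: closedin_diff)
  define P where "P = S \<inter> (f ^^ n) -` (S - V)"
  have oP: "openin (top_of_set S) P"
    unfolding P_def by (rule continuous_openin_preimage[OF iter_cont fS o1])
  have cP: "closedin (top_of_set S) P"
    unfolding P_def by (rule continuous_closedin_preimage_gen[OF iter_cont fS c1])
  define U' where "U' = U \<inter> V \<inter> P"
  have "clopen U'" unfolding U'_def using assms(1) V(1,2) oP cP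
    by (intro conjI openin_Int closedin_Int) auto
  moreover have "y \<in> U'" unfolding U'_def P_def using y(1) V(3,4) yS wS w_def by simp
  moreover have "U' \<inter> R n = {}"
  proof (rule ccontr)
    assume "U' \<inter> R n \<noteq> {}"
    then obtain z where z: "z \<in> U'" "z \<in> R n" by blast
    have "comp z \<subseteq> V" using clopen_sat[of S V z] V(1,2) z(1) unfolding U'_def by blast
    moreover have "(f ^^ n) z \<in> comp z" using z(2) unfolding R_def by blast
    moreover have "(f ^^ n) z \<notin> V" using z(1) unfolding U'_def P_def by blast
    ultimately show False by blast
  qed
  ultimately show ?thesis unfolding U'_def by blast
qed

lemma baire: "\<exists>N\<ge>1. \<exists>V. clopen V \<and> V \<noteq> {} \<and> V \<subseteq> R N"
proof (rule ccontr)
  assume no: "\<not> ?thesis"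
  define Q where "Q n U U' \<longleftrightarrow> clopen U' \<and> U' \<noteq> {} \<and> U' \<subseteq> U \<and> U' \<inter> R (Suc n) = {}" for n U U'
  have H: "\<exists>U'. Q n U U'" if "clopen U" "U \<noteq> {}" for n U
  proof -
    have "\<not> U \<subseteq> R (Suc n)" using no that by (metis Suc_eq_plus1 le_add2)
    then show ?thesis unfolding Q_def using bstep[OF that(1)] by blast
  qed
  define g where "g n U = (SOME U'. Q n U U')" for n U
  have gQ: "Q n U (g n U)" if "clopen U" "U \<noteq> {}" for n U
    unfolding g_def using H[OF that] by (rule someI_ex)
  define T :: "nat \<Rightarrow> 'a set" where "T = rec_nat S g"
  have T0: "T 0 = S" and TS: "T (Suc n) = g n (T n)" for n unfolding T_def by simp_all
  have Tc: "clopen (T n) \<and> T n \<noteq> {}" for n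
  proof (induction n)
    case 0 then show ?case using T0 ne by simp
  next
    case (Suc n)
    then have "Q n (T n) (T (Suc n))" using gQ TS by simp
    then show ?case unfolding Q_def by blast
  qed
  have Tsuc: "T (Suc n) \<subseteq> T n" and TR: "T (Suc n) \<inter> R (Suc n) = {}" for n
    using gQ[of "T n" n] Tc[of n] TS[of n] unfolding Q_def by auto
  have Tmono: "T m \<subseteq> T n" if "n \<le> m" for n m
    using that by (induction m rule: dec_induct) (use Tsuc in blast)+
  have Tcl: "closed (T i)" for i
    using Tc[of i] closedin_closed_trans compact_imp_closed[OF cpt] by blast
  have "S \<inter> (\<Inter>i\<in>UNIV. T i) \<noteq> {}"
  proof (rule compact_imp_fip_image[OF cpt])
    show "closed (T i)" for i by (rule Tcl)
    fix I' :: "nat set" assume fI: "finite I'"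
    show "S \<inter> (\<Inter>i\<in>I'. T i) \<noteq> {}"
    proof (cases "I' = {}")
      case True then show ?thesis using ne by simp
    next
      case False
      have "T (Max I') \<subseteq> S \<inter> (\<Inter>i\<in>I'. T i)"
        using Tmono Max_ge[OF fI] clopen_sub Tc by blast
      then show ?thesis using Tc[of "Max I'"] by blast
    qed
  qed
  then obtain y where y: "y \<in> S" "\<And>i. y \<in> T i" by blast
  obtain p where p: "p \<ge> 1" "(f ^^ p) y = y" using per y(1) by blast
  have "y \<in> R p" unfolding R_def using y(1) p(2) by simp
  moreover have "y \<in> T (Suc (p - 1))" using y(2) by blast
  moreover have "Suc (p - 1) = p" using p(1) by simp
  ultimately show False using TR[of "p - 1"] by auto
qed

lemma fill:
  assumes "clopen U" "U \<noteq> {}" "N \<ge> 1" "(f ^^ N) ` U \<subseteq> U"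
  shows "(\<Union>i<N. (f ^^ i) ` U) = S"
proof (rule L1)
  let ?B = "\<Union>i<N. (f ^^ i) ` U"
  show "clopen ?B"
  proof
    show "openin (top_of_set S) ?B"
      using clopen_iter_img[OF assms(1)] by (intro openin_Union) auto
    show "closedin (top_of_set S) ?B"
      using clopen_iter_img[OF assms(1)] by (intro closedin_Union) auto
  qed
  have "(f ^^ 0) ` U \<subseteq> ?B" using assms(3) by (intro UN_upper) simp
  then show "?B \<noteq> {}" using assms(2) by auto
  show "f ` ?B \<subseteq> ?B"
  proof
    fix z assume "z \<in> f ` ?B"
    then obtain i u where iu: "i < N" "u \<in> U" "z = f ((f ^^ i) u)" by blast
    then have z: "z = (f ^^ Suc i) u" by simp
    show "z \<in> ?B"
    proof (cases "Suc i < N")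
      case True then show ?thesis using z iu(2) by blast
    next
      case False
      then have "Suc i = N" using iu(1) by simp
      then have "z \<in> U" using z assms(4) iu(2) by blast
      moreover have "(0::nat) < N" using assms(3) by simp
      ultimately show ?thesis by force
    qed
  qed
qed

lemma funpow_comm: "(f ^^ a) ((f ^^ b) y) = (f ^^ b) ((f ^^ a) y)"
  by (metis add.commute funpow_add o_apply)

lemma RN_all: "\<exists>N\<ge>1. \<forall>y\<in>S. (f ^^ N) y \<in> comp y"
proof -
  obtain N V where NV: "N \<ge> 1" "clopen V" "V \<noteq> {}" "V \<subseteq> R N" using baire by blast
  have inv: "(f ^^ N) ` V \<subseteq> V"
  proof
    fix z assume "z \<in> (f ^^ N) ` V"
    then obtain v where v: "v \<in> V" "z = (f ^^ N) v" by blast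
    have "(f ^^ N) v \<in> comp v" using v(1) NV(4) unfolding R_def by blast
    moreover have "comp v \<subseteq> V" using clopen_sat[of S V v] NV(2) v(1) by blast
    ultimately show "z \<in> V" using v(2) by blast
  qed
  have cov: "(\<Union>i<N. (f ^^ i) ` V) = S" by (rule fill[OF NV(2,3,1) inv])
  have "\<forall>y\<in>S. (f ^^ N) y \<in> comp y"
  proof
    fix y assume "y \<in> S"
    then obtain i v where iv: "i < N" "v \<in> V" "y = (f ^^ i) v" using cov by blast
    have vS: "v \<in> S" using iv(2) clopen_sub[OF NV(2)] by blast
    have "(f ^^ N) v \<in> comp v" using iv(2) NV(4) unfolding R_def by blast
    then have "(f ^^ i) ((f ^^ N) v) \<in> comp ((f ^^ i) v)"
      using comp_iter_sub[OF vS, of i] by blast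
    then show "(f ^^ N) y \<in> comp y" using iv(3) funpow_comm by metis
  qed
  then show ?thesis using NV(1) by blast
qed

end


context tpo begin

lemma cover:
  assumes N: "N \<ge> 1" and RN: "\<forall>y\<in>S. (f ^^ N) y \<in> comp y" and y0: "y0 \<in> S" and wS: "w \<in> S"
  shows "\<exists>i<N. w \<in> comp ((f ^^ i) y0)"
proof (rule ccontr)
  assume no: "\<not> ?thesis"
  have nj: "(f ^^ j) w \<notin> comp y0" if "j < N" for j
  proof
    assume jin: "(f ^^ j) w \<in> comp y0"
    show False
    proof (cases "j = 0")
      case True then show False using no jin N by force
    next
      case False
      have "comp ((f ^^ (N - j)) ((f ^^ j) w)) = comp ((f ^^ (N - j)) y0)"
        by (rule comp_cong[OF y0 jin])
      moreover have "(f ^^ (N - j)) ((f ^^ j) w) = (f ^^ N) w"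
        using that by (metis funpow_add le_add_diff_inverse2 less_imp_le o_apply)
      moreover have "comp ((f ^^ N) w) = comp w"
        using RN wS connected_component_eq by blast
      ultimately have "comp w = comp ((f ^^ (N - j)) y0)" by simp
      then have "w \<in> comp ((f ^^ (N - j)) y0)" using wS by (metis comp_self)
      moreover have "N - j < N" using False that by simp
      ultimately show False using no by blast
    qed
  qed
  have "\<forall>j\<in>{..<N}. \<exists>V. clopen V \<and> y0 \<in> V \<and> (f ^^ j) w \<notin> V"
  proof
    fix j assume "j \<in> {..<N}"
    then have "(f ^^ j) w \<notin> comp y0" using nj by simp
    moreover have "(f ^^ j) w \<in> S" using iter_in[OF wS] .
    ultimately show "\<exists>V. clopen V \<and> y0 \<in> V \<and> (f ^^ j) w \<notin> V"
      using qc_sep[OF cpt y0] by blast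
  qed
  then obtain Vf where Vf: "\<And>j. j < N \<Longrightarrow> clopen (Vf j) \<and> y0 \<in> Vf j \<and> (f ^^ j) w \<notin> Vf j"
    by (metis lessThan_iff)
  define U where "U = \<Inter>(Vf ` {..<N})"
  have Nne: "{..<N} \<noteq> {}" using N lessThan_empty_iff by (metis not_one_le_zero)
  have cU: "clopen U"
  proof
    show "openin (top_of_set S) U" unfolding U_def
      using Vf Nne by (intro openin_Inter) auto
    show "closedin (top_of_set S) U" unfolding U_def
      using Vf Nne by (intro closedin_Inter) auto
  qed
  have y0U: "y0 \<in> U" unfolding U_def using Vf by simp
  have invU: "(f ^^ N) ` U \<subseteq> U"
  proof
    fix z assume "z \<in> (f ^^ N) ` U"
    then obtain u where u: "u \<in> U" "z = (f ^^ N) u" by blast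
    have uS: "u \<in> S" using u(1) clopen_sub[OF cU] by blast
    have "(f ^^ N) u \<in> comp u" using RN uS by blast
    moreover have "comp u \<subseteq> U" using clopen_sat[of S U u] cU u(1) by blast
    ultimately show "z \<in> U" using u(2) by blast
  qed
  have "(\<Union>i<N. (f ^^ i) ` U) = S" by (rule fill[OF cU _ N invU]) (use y0U in blast)
  then obtain i u where iu: "i < N" "u \<in> U" "w = (f ^^ i) u" using wS by blast
  have uS: "u \<in> S" using iu(2) clopen_sub[OF cU] by blast
  show False
  proof (cases "i = 0")
    case True
    then have "w \<in> Vf 0" using iu U_def N by auto
    then show False using Vf[of 0] N by simp
  next
    case False
    define j where "j = N - i"
    have j: "j < N" using False iu(1) j_def by simp
    have "(f ^^ j) w = (f ^^ N) u"
      using iu(1,3) j_def by (metis funpow_add le_add_diff_inverse2 less_imp_le o_apply)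
    moreover have "(f ^^ N) u \<in> U" using invU iu(2) by blast
    ultimately have "(f ^^ j) w \<in> Vf j" using U_def j by auto
    then show False using Vf[OF j] by blast
  qed
qed

lemma cyc_structure:
  "finite (components S) \<and>
   (\<exists>k::nat. \<exists>C::nat \<Rightarrow> 'a set. k \<ge> 1 \<and>
      inj_on C {..<k} \<and> C ` {..<k} = components S \<and>
      (\<forall>i<k. f ` C i = C (Suc i mod k)))"
proof -
  obtain N where N: "N \<ge> 1" and RN: "\<forall>y\<in>S. (f ^^ N) y \<in> comp y" using RN_all by blast
  obtain y0 where y0: "y0 \<in> S" using ne by blast
  define P where "P k \<longleftrightarrow> k \<ge> 1 \<and> comp ((f ^^ k) y0) = comp y0" for k
  have PN: "P N" unfolding P_def using N RN y0 connected_component_eq by blast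
  define k where "k = (LEAST k. P k)"
  have Pk: "P k" unfolding k_def using PN by (rule LeastI)
  have kmin: "\<not> P d" if "d < k" for d using that unfolding k_def by (rule not_less_Least)
  have k1: "k \<ge> 1" and kc: "comp ((f ^^ k) y0) = comp y0" using Pk unfolding P_def by auto
  define C where "C i = comp ((f ^^ i) y0)" for i
  have iS: "(f ^^ i) y0 \<in> S" for i using iter_in[OF y0] .
  have shift: "C (m + k) = C m" for m
  proof -
    have "(f ^^ k) y0 \<in> comp y0" using kc iS[of k] by (metis comp_self)
    then have "comp ((f ^^ m) ((f ^^ k) y0)) = comp ((f ^^ m) y0)" by (rule comp_cong[OF y0])
    then show ?thesis unfolding C_def by (simp add: funpow_add)
  qed
  have shiftq: "C (r + q * k) = C r" for r q
  proof (induction q)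
    case (Suc q)
    have "C (r + Suc q * k) = C ((r + q * k) + k)" by (simp add: algebra_simps)
    then show ?case using shift Suc by simp
  qed simp
  have modC: "C m = C (m mod k)" for m
    using shiftq[of "m mod k" "m div k"] by simp
  have inj: "inj_on C {..<k}"
  proof (rule inj_onI, rule ccontr)
    fix i j assume ij: "i \<in> {..<k}" "j \<in> {..<k}" "C i = C j" "i \<noteq> j"
    have gen: False if ab: "a < b" "b < k" "C a = C b" for a b
    proof -
      have "(f ^^ b) y0 \<in> comp ((f ^^ a) y0)" using ab(3) iS[of b] unfolding C_def by (metis comp_self)
      then have "comp ((f ^^ (k - b)) ((f ^^ b) y0)) = comp ((f ^^ (k - b)) ((f ^^ a) y0))"
        by (rule comp_cong[OF iS])
      moreover have "(f ^^ (k - b)) ((f ^^ b) y0) = (f ^^ k) y0"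
        using ab by (metis funpow_add le_add_diff_inverse2 less_imp_le o_apply)
      moreover have "(f ^^ (k - b)) ((f ^^ a) y0) = (f ^^ (k - b + a)) y0"
        by (simp add: funpow_add)
      ultimately have "comp ((f ^^ (k - b + a)) y0) = comp y0" using kc by simp
      moreover have "k - b + a < k" "k - b + a \<ge> 1" using ab by auto
      ultimately show False using kmin unfolding P_def by blast
    qed
    show False
    proof (cases "i < j")
      case True then show False using gen[of i j] ij by auto
    next
      case False then have "j < i" using ij(4) by simp
      then show False using gen[of j i] ij by auto
    qed
  qed
  have img: "C ` {..<k} = components S"
  proof
    show "C ` {..<k} \<subseteq> components S" unfolding C_def using iS componentsI by blast
    show "components S \<subseteq> C ` {..<k}"
    proof
      fix D assume "D \<in> components S"
      then obtain z where z: "z \<in> S" "D = comp z" by (auto simp: components_iff)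
      obtain i where i: "i < N" "z \<in> comp ((f ^^ i) y0)" using cover[OF N RN y0 z(1)] by blast
      have "D = C i" unfolding C_def using z(2) i(2) connected_component_eq by blast
      also have "\<dots> = C (i mod k)" by (rule modC)
      finally show "D \<in> C ` {..<k}" using k1 by auto
    qed
  qed
  have cyc: "\<forall>i<k. f ` C i = C (Suc i mod k)"
  proof (intro allI impI)
    fix i assume "i < k"
    have "f ` C i = comp (f ((f ^^ i) y0))" unfolding C_def by (rule comp_img[OF iS])
    also have "\<dots> = C (Suc i)" unfolding C_def by simp
    also have "\<dots> = C (Suc i mod k)" by (rule modC)
    finally show "f ` C i = C (Suc i mod k)" .
  qed
  have "finite (components S)" using img[symmetric] by simp
  then show ?thesis using k1 inj img cyc by blast
qed

end

theorem theorem1p1: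
  fixes X :: "'a::metric_space set" and f :: "'a \<Rightarrow> 'a" and x :: 'a
  assumes "compact X" and "continuous_on X f" and "f ` X \<subseteq> X" and "x \<in> X"
    and "omega_limit f x \<subseteq> periodic_points X f"
  shows "finite (components (omega_limit f x)) \<and>
         (\<exists>k::nat. \<exists>C::nat \<Rightarrow> 'a set. k \<ge> 1 \<and>
            inj_on C {..<k} \<and> C ` {..<k} = components (omega_limit f x) \<and>
            (\<forall>i<k. f ` C i = C (Suc i mod k)))"
proof -
  let ?W = "omega_limit f x"
  have WX: "?W \<subseteq> X" using om_sub assms(1,3,4) by blast
  interpret tpo ?W f
  proof
    show "compact ?W" using om_compact assms(1,3,4) by blast
    show "continuous_on ?W f" using continuous_on_subset[OF assms(2) WX] .
    show "f ` ?W \<subseteq> ?W" using om_inv assms(1,2,3,4) by blast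
    show "\<exists>n\<ge>1. (f ^^ n) y = y" if "y \<in> ?W" for y
      using that assms(5) unfolding periodic_points_def by blast
    show "?W \<noteq> {}" using om_nonempty assms(1,3,4) by blast
    show "A = ?W" if "openin (top_of_set ?W) A \<and> closedin (top_of_set ?W) A" "A \<noteq> {}" "f ` A \<subseteq> A" for A
      using om_L1[OF assms(1,2,3,4)] that by blast
  qed
  show ?thesis by (rule cyc_structure)
qed

end
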